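(* Let $L\in\mathbb{R}^{n\times n}$ be the Laplacian of an undirected unweighted graph on $n$ nodes, let $s \in \mathbb{R}^n$ be a mean-zero innate opinion vector and $z = (I+L)^{-1}s$. Let $u\neq v$ be two nodes not joined by an edge, let $E = \chi_{u,v}\chi_{u,v}^T$ be the edge Laplacian of $(u,v)$, and let $\delta = z(u)-z(v)$. Then $$PD(L) - \delta^2 \le PD(L+E) \le PD(L) - \frac{\delta^2}{3}.$$
   Context: $\chi_{u,v}\in\mathbb{R}^n$ is the vector with $1$ in coordinate $u$, $-1$ in coordinate $v$ and $0$ elsewhere. Friedkin–Johnsen model: expressed opinions $z=(I+L)^{-1}s$. With $s$ fixed, the polarization+disagreement of a graph with Laplacian $M$ is $PD(M) = s^T (I+M)^{-1} s$. *)

theory Defs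
  imports "HOL-Analysis.Analysis"
begin

definition undirected_graph :: "('n \<Rightarrow> 'n \<Rightarrow> bool) \<Rightarrow> bool" where
  "undirected_graph A \<longleftrightarrow> (\<forall>i j. A i j \<longleftrightarrow> A j i) \<and> (\<forall>i. \<not> A i i)"

definition graph_laplacian :: "('n::finite \<Rightarrow> 'n \<Rightarrow> bool) \<Rightarrow> real^'n^'n" where
  "graph_laplacian A = (\<chi> i j. if i = j then real (card {k. A i k})
                               else if A i j then -1 else 0)"

definition chi_vec :: "'n::finite \<Rightarrow> 'n \<Rightarrow> real^'n" where
  "chi_vec u v = (\<chi> i. if i = u then 1 else if i = v then -1 else 0)"

definition outer :: "real^'n \<Rightarrow> real^'n \<Rightarrow> real^'n^'n" where
  "outer x y = (\<chi> i j. x $ i * y $ j)"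

definition edge_laplacian :: "'n::finite \<Rightarrow> 'n \<Rightarrow> real^'n^'n" where
  "edge_laplacian u v = outer (chi_vec u v) (chi_vec u v)"

definition fj_opinions :: "real^'n^'n \<Rightarrow> real^'n \<Rightarrow> real^'n" where
  "fj_opinions L s = matrix_inv (mat 1 + L) *v s"

definition PD :: "real^'n \<Rightarrow> real^'n^'n \<Rightarrow> real" where
  "PD s M = s \<bullet> (matrix_inv (mat 1 + M) *v s)"

end

theory Submission
  imports Defs
begin

lemma lap_entry:
  assumes "undirected_graph A"
  shows "graph_laplacian A $ i $ j = (if i = j then real (card {k. A i k}) else 0) - (if A i j then 1 else 0)"
  using assms unfolding graph_laplacian_def undirected_graph_def by auto

lemma lap_mult:
  fixes A :: "'n::finite \<Rightarrow> 'n \<Rightarrow> bool"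
  assumes "undirected_graph A"
  shows "(graph_laplacian A *v x) $ i = (\<Sum>j\<in>UNIV. if A i j then x$i - x$j else 0)"
proof -
  have "(graph_laplacian A *v x) $ i = (\<Sum>j\<in>UNIV. ((if i = j then real (card {k. A i k}) else 0) - (if A i j then 1 else 0)) * x$j)"
    by (simp add: matrix_vector_mult_def lap_entry[OF assms])
  also have "\<dots> = (\<Sum>j\<in>UNIV. (if i = j then real (card {k. A i k}) else 0) * x$j) - (\<Sum>j\<in>UNIV. (if A i j then 1 else 0) * x$j)"
    by (subst sum_subtractf[symmetric]) (simp only: left_diff_distrib)
  also have "(\<Sum>j\<in>UNIV. (if i = j then real (card {k. A i k}) else 0) * x$j) = real (card {k. A i k}) * x$i"
  proof -
    have "(\<Sum>j\<in>UNIV. (if i = j then real (card {k. A i k}) else 0) * x$j) = (\<Sum>j\<in>UNIV. if i = j then real (card {k. A i k}) * x$i else 0)"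
      by (rule sum.cong) auto
    then show ?thesis by simp
  qed
  also have "(\<Sum>j\<in>UNIV. (if A i j then 1 else 0) * x$j) = (\<Sum>j\<in>UNIV. (if A i j then x$j else 0))"
    by (rule sum.cong) auto
  also have "(\<Sum>j\<in>UNIV. if A i j then x$i - x$j else 0) = (\<Sum>j\<in>UNIV. (if A i j then x$i else 0)) - (\<Sum>j\<in>UNIV. (if A i j then x$j else 0))"
    by (simp add: sum_subtractf[symmetric] if_distrib cong: if_cong)
  moreover have "(\<Sum>j\<in>UNIV. (if A i j then x$i else 0)) = real (card {k. A i k}) * x$i"
    by (simp add: sum.If_cases)
  ultimately show ?thesis by simp
qed

lemma lap_psd:
  fixes A :: "'n::finite \<Rightarrow> 'n \<Rightarrow> bool"
  assumes "undirected_graph A"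
  shows "x \<bullet> (graph_laplacian A *v x) \<ge> 0"
proof -
  have sym: "\<And>i j. A i j = A j i" using assms unfolding undirected_graph_def by blast
  define S where "S = (\<Sum>i\<in>UNIV. \<Sum>j\<in>UNIV. if A i j then x$i * (x$i - x$j) else 0)"
  have e: "x \<bullet> (graph_laplacian A *v x) = S"
    unfolding S_def inner_vec_def lap_mult[OF assms] by (simp add: sum_distrib_left if_distrib cong: if_cong)
  have "S = (\<Sum>j\<in>UNIV. \<Sum>i\<in>UNIV. if A i j then x$i * (x$i - x$j) else 0)"
    unfolding S_def by (rule sum.swap)
  also have "\<dots> = (\<Sum>i\<in>UNIV. \<Sum>j\<in>UNIV. if A i j then x$j * (x$j - x$i) else 0)"
    using sym by (simp cong: if_cong)
  finally have S2: "S = (\<Sum>i\<in>UNIV. \<Sum>j\<in>UNIV. if A i j then x$j * (x$j - x$i) else 0)" .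
  have "2 * S = S + S" by simp
  also have "\<dots> = (\<Sum>i\<in>UNIV. \<Sum>j\<in>UNIV. (if A i j then x$i * (x$i - x$j) else 0) + (if A i j then x$j * (x$j - x$i) else 0))"
    by (subst (2) S2) (simp add: S_def sum.distrib[symmetric])
  also have "\<dots> = (\<Sum>i\<in>UNIV. \<Sum>j\<in>UNIV. if A i j then (x$i - x$j)^2 else 0)"
    by (intro sum.cong refl) (auto simp: power2_eq_square algebra_simps)
  finally have "2 * S = (\<Sum>i\<in>UNIV. \<Sum>j\<in>UNIV. if A i j then (x$i - x$j)^2 else 0)" .
  moreover have "(\<Sum>i\<in>UNIV. \<Sum>j\<in>UNIV. if A i j then (x$i - x$j)^2 else 0) \<ge> 0"
    by (intro sum_nonneg) auto
  ultimately show ?thesis using e by simp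
qed

lemma pos_invertible:
  fixes M :: "real^'n::finite^'n"
  assumes "\<And>x. x \<bullet> x \<le> x \<bullet> (M *v x)"
  shows "invertible M"
  unfolding invertible_left_inverse matrix_left_invertible_ker
proof (intro allI impI)
  fix x assume "M *v x = 0"
  then have "x \<bullet> x \<le> 0" using assms[of x] by simp
  then show "x = 0" by (metis inner_gt_zero_iff not_le)
qed

lemma inv_apply:
  fixes M :: "real^'n::finite^'n"
  assumes "invertible M"
  shows "M *v (matrix_inv M *v y) = y"
proof -
  have "M ** matrix_inv M = mat 1 \<and> matrix_inv M ** M = mat 1"
    using assms unfolding invertible_def matrix_inv_def by (rule someI_ex)
  then show ?thesis by (simp add: matrix_vector_mul_assoc)
qed

lemma sym_inner:
  fixes M :: "real^'n::finite^'n"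
  assumes "transpose M = M"
  shows "(M *v a) \<bullet> b = a \<bullet> (M *v b)"
proof -
  have "(M *v a) = a v* M" by (metis assms transpose_matrix_vector)
  then show ?thesis by (simp add: dot_lmul_matrix)
qed

lemma outer_mult: "outer c c *v x = (c \<bullet> x) *s c"
  by (simp add: vec_eq_iff matrix_vector_mult_def outer_def inner_vec_def sum_distrib_left algebra_simps)

lemma sherman:
  fixes M :: "real^'n::finite^'n" and c s :: "real^'n"
  assumes sym: "transpose M = M" and pos: "\<And>x. x \<bullet> x \<le> x \<bullet> (M *v x)"
  defines "z \<equiv> matrix_inv M *v s" and "w \<equiv> matrix_inv M *v c"
  shows "s \<bullet> (matrix_inv (M + outer c c) *v s) = s \<bullet> z - (c \<bullet> z)^2 / (1 + c \<bullet> w)"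
    and "0 \<le> c \<bullet> w" and "(c \<bullet> w)^2 \<le> (c \<bullet> c) * (c \<bullet> w)"
proof -
  have iM: "invertible M" using pos by (rule pos_invertible)
  have Mz: "M *v z = s" unfolding z_def by (rule inv_apply[OF iM])
  have Mw: "M *v w = c" unfolding w_def by (rule inv_apply[OF iM])
  have posN: "x \<bullet> x \<le> x \<bullet> ((M + outer c c) *v x)" for x
  proof -
    have "x \<bullet> ((M + outer c c) *v x) = x \<bullet> (M *v x) + (c \<bullet> x)^2"
      by (simp add: matrix_vector_mult_add_rdistrib outer_mult inner_add_right power2_eq_square inner_commute scalar_mult_eq_scaleR)
    then show ?thesis using pos[of x] by (smt (verit) zero_le_power2)
  qed
  have iN: "invertible (M + outer c c)" using posN by (rule pos_invertible)
  define y where "y = matrix_inv (M + outer c c) *v s"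
  have Ny: "(M + outer c c) *v y = s" unfolding y_def by (rule inv_apply[OF iN])
  define t where "t = c \<bullet> y"
  have My: "M *v y + t *s c = s" using Ny by (simp add: matrix_vector_mult_add_rdistrib outer_mult t_def)
  have "M *v (y - z + t *s w) = 0"
    using My Mz Mw by (simp add: matrix_vector_mult_diff_distrib matrix_vector_right_distrib scalar_mult_eq_scaleR matrix_vector_mult_scaleR algebra_simps)
  then have "y - z + t *s w = 0" using inj_matrix_vector_mult[OF iM]
    by (metis injD matrix_vector_mult_0_right)
  then have yeq: "y = z - t *s w" by (simp add: algebra_simps)
  have ww: "w \<bullet> w \<le> c \<bullet> w" using pos[of w] Mw by (simp add: inner_commute)
  show cw0: "0 \<le> c \<bullet> w" using ww by (smt (verit) inner_ge_zero)
  have "(c \<bullet> w)^2 \<le> (norm c * norm w)^2"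
    by (metis Cauchy_Schwarz_ineq2 abs_ge_zero abs_le_square_iff abs_mult abs_norm_cancel norm_mult) 
  also have "\<dots> = (c \<bullet> c) * (w \<bullet> w)" by (simp add: power_mult_distrib dot_square_norm)
  also have "\<dots> \<le> (c \<bullet> c) * (c \<bullet> w)" using ww by (simp add: mult_left_mono)
  finally show "(c \<bullet> w)^2 \<le> (c \<bullet> c) * (c \<bullet> w)" .
  have sw: "s \<bullet> w = c \<bullet> z" using sym_inner[OF sym, of z w] Mz Mw by (simp add: inner_commute)
  have "t = c \<bullet> z - t * (c \<bullet> w)" using arg_cong[OF yeq, of "inner c"] by (simp add: t_def[symmetric] inner_diff_right scalar_mult_eq_scaleR)
  then have teq: "t = (c \<bullet> z) / (1 + c \<bullet> w)" using cw0 by (simp add: field_simps)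
  have "s \<bullet> y = s \<bullet> z - t * (c \<bullet> z)" using arg_cong[OF yeq, of "inner s"] sw by (simp add: inner_diff_right scalar_mult_eq_scaleR)
  then show "s \<bullet> (matrix_inv (M + outer c c) *v s) = s \<bullet> z - (c \<bullet> z)^2 / (1 + c \<bullet> w)"
    using teq by (simp add: y_def power2_eq_square)
qed

lemma chi_inner:
  assumes "u \<noteq> v"
  shows "chi_vec u v \<bullet> x = x$u - x$v"
proof -
  have "chi_vec u v \<bullet> x = (\<Sum>i\<in>UNIV. (if i = u then x$u else 0) + (if i = v then - x$v else 0))"
    unfolding inner_vec_def chi_vec_def using assms by (intro sum.cong) auto
  then show ?thesis by (simp add: sum.distrib)
qed

lemma chi_chi:
  assumes "u \<noteq> v"
  shows "chi_vec u v \<bullet> chi_vec u v = 2"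
  using chi_inner[OF assms] assms by (simp add: chi_vec_def)

theorem mainTheorem4:
  fixes A :: "'n::finite \<Rightarrow> 'n \<Rightarrow> bool" and s :: "real^'n" and u v :: 'n
  assumes "undirected_graph A"
    and "(\<Sum>i\<in>UNIV. s $ i) = 0"
    and "u \<noteq> v" and "\<not> A u v"
  defines "L \<equiv> graph_laplacian A"
    and "z \<equiv> fj_opinions (graph_laplacian A) s"
    and "E \<equiv> edge_laplacian u v"
    and "\<delta> \<equiv> fj_opinions (graph_laplacian A) s $ u - fj_opinions (graph_laplacian A) s $ v"
  shows "PD s L - \<delta>\<^sup>2 \<le> PD s (L + E) \<and> PD s (L + E) \<le> PD s L - \<delta>\<^sup>2 / 3"
proof -
  define M where "M = mat 1 + L"
  define c where "c = chi_vec u v"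
  have symA: "\<And>i j. A i j = A j i" using assms(1) unfolding undirected_graph_def by blast
  have symM: "transpose M = M"
    unfolding M_def L_def by (simp add: vec_eq_iff transpose_def lap_entry[OF assms(1)] mat_def symA)
  have posM: "x \<bullet> x \<le> x \<bullet> (M *v x)" for x
    using lap_psd[OF assms(1), of x] unfolding M_def L_def
    by (simp add: matrix_vector_mult_add_rdistrib inner_add_right)
  define w where "w = matrix_inv M *v c"
  have sh: "s \<bullet> (matrix_inv (M + outer c c) *v s) = s \<bullet> (matrix_inv M *v s) - (c \<bullet> (matrix_inv M *v s))^2 / (1 + c \<bullet> w)"
    "0 \<le> c \<bullet> w" "(c \<bullet> w)^2 \<le> (c \<bullet> c) * (c \<bullet> w)"
    unfolding w_def by (rule sherman[OF symM posM])+
  have PDL: "PD s L = s \<bullet> (matrix_inv M *v s)" unfolding PD_def M_def ..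
  have PDLE: "PD s (L + E) = s \<bullet> (matrix_inv (M + outer c c) *v s)"
    unfolding PD_def M_def E_def edge_laplacian_def c_def by (simp add: add.assoc)
  have dl: "c \<bullet> (matrix_inv M *v s) = \<delta>"
    unfolding c_def chi_inner[OF assms(3)] \<delta>_def fj_opinions_def M_def L_def ..
  have eq: "PD s (L + E) = PD s L - \<delta>^2 / (1 + c \<bullet> w)"
    using sh(1) PDL PDLE dl by simp
  have c0: "0 \<le> c \<bullet> w" by (rule sh(2))
  have "(c \<bullet> w)^2 \<le> 2 * (c \<bullet> w)" using sh(3) chi_chi[OF assms(3)] by (simp add: c_def) note c2h = this
  have c2: "c \<bullet> w \<le> 2"
  proof (rule ccontr)
    assume "\<not> c \<bullet> w \<le> 2"
    then have "2 * (c \<bullet> w) < (c \<bullet> w) * (c \<bullet> w)" by (intro mult_strict_right_mono) auto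
    then show False using \<open>(c \<bullet> w)^2 \<le> 2 * (c \<bullet> w)\<close> by (simp add: power2_eq_square)
  qed
  have d0: "0 \<le> \<delta>^2" by simp
  have "\<delta>^2 / (1 + c \<bullet> w) \<le> \<delta>^2" using c0 d0 by (simp add: divide_le_eq mult_le_cancel_left1)
  moreover have "\<delta>^2 / 3 \<le> \<delta>^2 / (1 + c \<bullet> w)" by (rule divide_left_mono) (use c0 c2 in auto)
  ultimately show ?thesis using eq by linarith
qed

end
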